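(* Let $(F,d)$ be a $\sigma$-compact metric space whose Borel $\sigma$-algebra makes it a standard Borel space, and let $\mathcal{N}$ be a Radon measure on $F$. Let $R>0$ and let $p\in L^1_{\mathcal{N}}$ be continuous. Let $\hat y$ lie in the interior of $\mathrm{Supp}(\mathcal{N})$, and assume $y\mapsto\exp(-a\,d_R^2(y,\hat y))\in L^1_{\mathcal{N}}$ for every $a>0$. Then $$\int_F\frac{e^{-a\,d_R(y,\hat y)^2}}{\int_F e^{-a\,d(y',\hat y)^2}\,d\mathcal{N}(y')}\,p(y)\,d\mathcal{N}(y)\xrightarrow[a\to\infty]{}p(\hat y).$$
   Context: $d_R=\min(d,R)$. $\mathrm{Supp}(\mathcal{N})$ is the complement of the union of all $\mathcal{N}$-null open sets. *)

theory Defs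
  imports "HOL-Analysis.Analysis"
begin

definition standard_borel_space :: "'a measure \<Rightarrow> bool" where
  "standard_borel_space M \<longleftrightarrow>
     (\<exists>T :: 'a topology. topspace T = space M \<and> completely_metrizable_space T
        \<and> separable_space T \<and> sets M = sigma_sets (space M) {U. openin T U})"

definition sigma_compact_space :: "'a::topological_space itself \<Rightarrow> bool" where
  "sigma_compact_space _ \<longleftrightarrow>
     (\<exists>K :: nat \<Rightarrow> 'a set. (\<forall>n. compact (K n)) \<and> (\<Union>n. K n) = UNIV)"

definition radon_measure :: "'a::topological_space measure \<Rightarrow> bool" where
  "radon_measure N \<longleftrightarrow>
     sets N = sets borel
     \<and> (\<forall>x. \<exists>U. open U \<and> x \<in> U \<and> emeasure N U < \<infinity>)
     \<and> (\<forall>A\<in>sets borel. emeasure N A = (SUP K\<in>{K. compact K \<and> K \<subseteq> A}. emeasure N K))"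

definition measure_support :: "'a::topological_space measure \<Rightarrow> 'a set" where
  "measure_support N = - \<Union>{U. open U \<and> U \<in> sets N \<and> emeasure N U = 0}"

end

theory Submission
  imports Defs
begin

theorem lemmaB2:
  fixes N :: "'a::metric_space measure"
    and p :: "'a \<Rightarrow> real"
    and R :: real
    and yhat :: 'a
  assumes sigma_compact: "sigma_compact_space TYPE('a)"
    and std_borel: "standard_borel_space (borel :: 'a measure)"
    and radon: "radon_measure N"
    and R_pos: "R > 0"
    and p_int: "integrable N p"
    and p_cont: "continuous_on UNIV p"
    and yhat_int: "yhat \<in> interior (measure_support N)"
    and gauss_int: "\<And>a. a > 0 \<Longrightarrow>
          integrable N (\<lambda>y. exp (- a * (min (dist y yhat) R)\<^sup>2))"
  shows "((\<lambda>a. \<integral>y. exp (- a * (min (dist y yhat) R)\<^sup>2)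
                  / (\<integral>y'. exp (- a * (dist y' yhat)\<^sup>2) \<partial>N) * p y \<partial>N)
          \<longlongrightarrow> p yhat) at_top"
proof -
  have sN: "sets N = sets borel" using radon unfolding radon_measure_def by blast
  have spN: "space N = UNIV" using sets_eq_imp_space_eq[OF sN] by simp
  have meas: "f \<in> borel_measurable N" if "continuous_on UNIV f" for f :: "'a \<Rightarrow> real"
    using borel_measurable_continuous_onI[OF that] measurable_cong_sets[OF sN refl] by blast
  define D where "D y = dist y yhat" for y
  have contD: "continuous_on UNIV D" unfolding D_def by (intro continuous_intros)
  have fin: "finite_measure N"
  proof
    have i1: "integrable N (\<lambda>y. exp (- 1 * (min (dist y yhat) R)\<^sup>2))" using gauss_int[of 1] by simp
    have "(\<integral>\<^sup>+ y. ennreal (exp (- (R\<^sup>2))) \<partial>N) \<le> (\<integral>\<^sup>+ y. ennreal (norm (exp (- 1 * (min (dist y yhat) R)\<^sup>2))) \<partial>N)"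
    proof (rule nn_integral_mono)
      fix y
      have "(min (dist y yhat) R)\<^sup>2 \<le> R\<^sup>2" using R_pos
        by (intro power_mono) auto
      then show "ennreal (exp (- (R\<^sup>2))) \<le> ennreal (norm (exp (- 1 * (min (dist y yhat) R)\<^sup>2)))"
        by (intro ennreal_leI) simp
    qed
    also have "\<dots> < \<infinity>" using integrableD(2)[OF i1] by (simp add: top.not_eq_extremum)
    finally have "ennreal (exp (- (R\<^sup>2))) * emeasure N (space N) < \<infinity>" by simp
    then show "emeasure N (space N) \<noteq> \<infinity>"
      by (auto simp: ennreal_mult_less_top)
  qed
  interpret finite_measure N by (rule fin)
  have pyhat: "yhat \<in> measure_support N" using yhat_int interior_subset by blast
  have ballpos: "measure N (ball yhat r) > 0" if "r > 0" for r
  proof -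
    have "ball yhat r \<in> sets N" using sN by simp
    moreover have "yhat \<in> ball yhat r" using that by simp
    ultimately have "emeasure N (ball yhat r) \<noteq> 0"
      using pyhat unfolding measure_support_def by blast
    then show ?thesis
      by (simp add: emeasure_eq_measure zero_less_measure_iff)
  qed
  show ?thesis
  proof (rule tendstoI)
    fix e :: real assume e: "e > 0"
    define \<epsilon> where "\<epsilon> = e / 2"
    have \<epsilon>: "\<epsilon> > 0" using e by (simp add: \<epsilon>_def)
    obtain \<delta>0 where \<delta>0: "\<delta>0 > 0" "\<And>y. dist y yhat < \<delta>0 \<Longrightarrow> dist (p y) (p yhat) < \<epsilon>"
      using p_cont \<epsilon> unfolding continuous_on_iff by blast
    define \<delta> where "\<delta> = min \<delta>0 R"
    have \<delta>: "\<delta> > 0" "\<delta> \<le> R" "\<delta> \<le> \<delta>0" using \<delta>0 R_pos by (auto simp: \<delta>_def)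
    define \<eta> where "\<eta> = \<delta> / 2"
    have \<eta>: "\<eta> > 0" using \<delta> by (simp add: \<eta>_def)
    define m where "m = measure N (ball yhat \<eta>)"
    have m: "m > 0" using ballpos[OF \<eta>] by (simp add: m_def)
    define k where "k = \<delta>\<^sup>2 - \<eta>\<^sup>2"
    have k: "k > 0" using \<delta> by (simp add: k_def \<eta>_def power2_eq_square)
    define C where "C = (\<integral>y. \<bar>p y\<bar> \<partial>N) + \<bar>p yhat\<bar> * measure N (space N)"
    have C: "C \<ge> 0" unfolding C_def by (intro add_nonneg_nonneg mult_nonneg_nonneg integral_nonneg_AE) auto
    have lim1: "filterlim (\<lambda>a::real. k * a) at_top at_top"
      by (rule filterlim_tendsto_pos_mult_at_top[OF tendsto_const k filterlim_ident])
    have lim2: "filterlim (\<lambda>a::real. - (k * a)) at_bot at_top"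
      using lim1 filterlim_uminus_at_top[of "\<lambda>a. k * a" at_top] by simp
    have lim3: "((\<lambda>a. exp (- (k * a))) \<longlongrightarrow> 0) at_top"
      using filterlim_compose[OF exp_at_bot lim2] by simp
    have lim4: "((\<lambda>a. C / m * exp (- (k * a))) \<longlongrightarrow> 0) at_top"
      using tendsto_mult_right_zero[OF lim3, of "C / m"] by (simp only:)
    have ev1: "eventually (\<lambda>a. C / m * exp (- (k * a)) < \<epsilon>) at_top"
      using order_tendstoD(2)[OF lim4 \<epsilon>] .
    have ev2: "eventually (\<lambda>a::real. a > 0) at_top" by (rule eventually_gt_at_top)
    show "eventually (\<lambda>a. dist (\<integral>y. exp (- a * (min (dist y yhat) R)\<^sup>2)
                  / (\<integral>y'. exp (- a * (dist y' yhat)\<^sup>2) \<partial>N) * p y \<partial>N) (p yhat) < e) at_top"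
      using ev1 ev2
    proof eventually_elim
      case (elim a)
      define E1 where "E1 y = exp (- a * (min (dist y yhat) R)\<^sup>2)" for y
      define E2 where "E2 y = exp (- a * (dist y yhat)\<^sup>2)" for y
      define Z where "Z = (\<integral>y. E2 y \<partial>N)"
      have iE1: "integrable N E1" unfolding E1_def using gauss_int elim by simp
      have mE1: "E1 \<in> borel_measurable N" unfolding E1_def by (intro meas continuous_intros)
      have mE2: "E2 \<in> borel_measurable N" unfolding E2_def by (intro meas continuous_intros)
      have mp: "p \<in> borel_measurable N" by (rule meas[OF p_cont])
      have E1le: "E1 y \<le> 1" for y unfolding E1_def using elim by auto
      have E1ge: "\<bar>E1 y\<bar> = E1 y" "E1 y \<ge> 0" for y unfolding E1_def by (simp_all add: order_less_imp_le)
      have E2le: "E2 y \<le> 1" for y unfolding E2_def using elim by auto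
      have iE2: "integrable N E2"
        by (rule integrable_const_bound[where B=1]) (use mE2 E2le in \<open>auto simp: E2_def\<close>)
      have iE1p: "integrable N (\<lambda>y. E1 y * p y)"
        by (rule Bochner_Integration.integrable_bound[OF p_int]) (use mE1 mp E1le E1ge in \<open>auto intro!: AE_I2 mult_left_le_one_le simp: abs_mult\<close>)
      have Zlow: "exp (- a * \<eta>\<^sup>2) * m \<le> Z"
      proof -
        have "exp (- a * \<eta>\<^sup>2) * m = (\<integral>y. exp (- a * \<eta>\<^sup>2) * indicator (ball yhat \<eta>) y \<partial>N)"
          by (simp add: m_def spN)
        also have "\<dots> \<le> Z" unfolding Z_def
        proof (rule integral_mono[OF _ iE2])
          show "integrable N (\<lambda>y. exp (- a * \<eta>\<^sup>2) * indicator (ball yhat \<eta>) y)"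
            using sN by (intro integrable_mult_right integrable_real_indicator) (auto simp: less_top[symmetric])
        next
          fix y
          show "exp (- a * \<eta>\<^sup>2) * indicator (ball yhat \<eta>) y \<le> E2 y"
          proof (cases "y \<in> ball yhat \<eta>")
            case True
            then have "dist y yhat < \<eta>" by (simp add: dist_commute)
            then have "(dist y yhat)\<^sup>2 \<le> \<eta>\<^sup>2" by (intro power_mono) auto
            then show ?thesis using True elim unfolding E2_def by simp
          qed (simp add: E2_def)
        qed
        finally show ?thesis .
      qed
      have Zpos: "Z > 0" using Zlow m by (smt (verit) exp_gt_zero mult_pos_pos)
      have pw: "\<bar>E1 y * p y - E2 y * p yhat\<bar> \<le> \<epsilon> * E2 y + exp (- a * \<delta>\<^sup>2) * (\<bar>p y\<bar> + \<bar>p yhat\<bar>)" for y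
      proof (cases "dist y yhat < \<delta>")
        case True
        then have "min (dist y yhat) R = dist y yhat" using \<delta> by simp
        then have "E1 y = E2 y" unfolding E1_def E2_def by simp
        moreover have "\<bar>p y - p yhat\<bar> < \<epsilon>" using \<delta>0(2)[of y] True \<delta> by (simp add: dist_real_def)
        ultimately have "\<bar>E1 y * p y - E2 y * p yhat\<bar> \<le> \<epsilon> * E2 y"
          by (simp add: right_diff_distrib[symmetric] abs_mult E2_def)
        moreover have "0 \<le> exp (- a * \<delta>\<^sup>2) * (\<bar>p y\<bar> + \<bar>p yhat\<bar>)" by simp
        ultimately show ?thesis by linarith
      next
        case False
        then have "\<delta>\<^sup>2 \<le> (min (dist y yhat) R)\<^sup>2" "\<delta>\<^sup>2 \<le> (dist y yhat)\<^sup>2"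
          using \<delta> by (auto intro!: power_mono)
        then have "a * \<delta>\<^sup>2 \<le> a * (min (dist y yhat) R)\<^sup>2" "a * \<delta>\<^sup>2 \<le> a * (dist y yhat)\<^sup>2"
          using elim by (auto intro!: mult_left_mono)
        then have X1: "E1 y \<le> exp (- a * \<delta>\<^sup>2)" and X2: "E2 y \<le> exp (- a * \<delta>\<^sup>2)"
          unfolding E1_def E2_def by simp_all
        have "\<bar>E1 y * p y - E2 y * p yhat\<bar> \<le> \<bar>E1 y * p y\<bar> + \<bar>E2 y * p yhat\<bar>"
          by (rule abs_triangle_ineq4)
        also have "\<dots> = E1 y * \<bar>p y\<bar> + E2 y * \<bar>p yhat\<bar>"
          by (simp add: abs_mult E1_def E2_def)
        also have "\<dots> \<le> exp (- a * \<delta>\<^sup>2) * \<bar>p y\<bar> + exp (- a * \<delta>\<^sup>2) * \<bar>p yhat\<bar>"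
          using X1 X2 by (intro add_mono mult_right_mono) auto
        finally have "\<bar>E1 y * p y - E2 y * p yhat\<bar> \<le> exp (- a * \<delta>\<^sup>2) * (\<bar>p y\<bar> + \<bar>p yhat\<bar>)"
          by (simp add: distrib_left)
        moreover have "0 \<le> \<epsilon> * E2 y" using \<epsilon> by (simp add: E2_def)
        ultimately show ?thesis by linarith
      qed
      have ig: "integrable N (\<lambda>y. E1 y * p y - E2 y * p yhat)"
        using iE1p iE2 by auto
      have ib: "integrable N (\<lambda>y. \<epsilon> * E2 y + exp (- a * \<delta>\<^sup>2) * (\<bar>p y\<bar> + \<bar>p yhat\<bar>))"
        using iE2 p_int by auto
      have "\<bar>(\<integral>y. E1 y * p y \<partial>N) - p yhat * Z\<bar> = \<bar>\<integral>y. E1 y * p y - E2 y * p yhat \<partial>N\<bar>"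
        using iE1p iE2 by (simp add: Z_def mult.commute)
      also have "\<dots> \<le> (\<integral>y. \<bar>E1 y * p y - E2 y * p yhat\<bar> \<partial>N)"
        using integral_norm_bound[of N "\<lambda>y. E1 y * p y - E2 y * p yhat"] by simp
      also have "\<dots> \<le> (\<integral>y. \<epsilon> * E2 y + exp (- a * \<delta>\<^sup>2) * (\<bar>p y\<bar> + \<bar>p yhat\<bar>) \<partial>N)"
        by (rule integral_mono[OF _ ib pw]) (use ig in auto)
      also have "\<dots> = \<epsilon> * Z + exp (- a * \<delta>\<^sup>2) * C"
        using iE2 p_int by (simp add: Z_def C_def algebra_simps spN)
      finally have key: "\<bar>(\<integral>y. E1 y * p y \<partial>N) - p yhat * Z\<bar> \<le> \<epsilon> * Z + exp (- a * \<delta>\<^sup>2) * C" .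
      have eq: "(\<integral>y. exp (- a * (min (dist y yhat) R)\<^sup>2)
                  / (\<integral>y'. exp (- a * (dist y' yhat)\<^sup>2) \<partial>N) * p y \<partial>N) = (\<integral>y. E1 y * p y \<partial>N) / Z"
      proof -
        have "(\<lambda>y. exp (- a * (min (dist y yhat) R)\<^sup>2)
                  / (\<integral>y'. exp (- a * (dist y' yhat)\<^sup>2) \<partial>N) * p y) = (\<lambda>y. E1 y * p y / Z)"
          by (simp add: E1_def E2_def Z_def fun_eq_iff)
        then show ?thesis by simp
      qed
      have "\<bar>(\<integral>y. E1 y * p y \<partial>N) / Z - p yhat\<bar> = \<bar>(\<integral>y. E1 y * p y \<partial>N) - p yhat * Z\<bar> / Z"
        using Zpos by (simp add: field_simps)
      also have "\<dots> \<le> (\<epsilon> * Z + exp (- a * \<delta>\<^sup>2) * C) / Z"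
        using key Zpos by (simp add: divide_right_mono)
      also have "\<dots> = \<epsilon> + exp (- a * \<delta>\<^sup>2) * C / Z" using Zpos by (simp add: field_simps)
      also have "\<dots> \<le> \<epsilon> + exp (- a * \<delta>\<^sup>2) * C / (exp (- a * \<eta>\<^sup>2) * m)"
        using Zlow m C Zpos by (intro add_left_mono divide_left_mono mult_nonneg_nonneg) auto
      also have "exp (- a * \<delta>\<^sup>2) * C / (exp (- a * \<eta>\<^sup>2) * m) = C / m * exp (- (k * a))"
      proof -
        have "exp (- a * \<delta>\<^sup>2) = exp (- (k * a)) * exp (- a * \<eta>\<^sup>2)"
          by (simp add: k_def exp_add[symmetric] algebra_simps)
        then show ?thesis using m by (simp add: field_simps)
      qed
      also have "\<epsilon> + C / m * exp (- (k * a)) < e" using elim(1) \<epsilon>_def by linarith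
      finally show ?case using eq by (simp add: dist_real_def)
    qed
  qed
qed

end
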